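(* For $(\alpha,\beta)\in\mathbb{R}^2$, let $\mathfrak{m}_{\alpha,\beta}$ be the $8$-dimensional real Lie algebra with a basis $\{v^1,\dots,v^8\}$ of its dual satisfying $$dv^1=dv^2=dv^3=0,\quad dv^4=v^{13},\quad dv^5=v^{23},\quad dv^6=v^{14}+v^{25}-v^{35},$$ $$dv^7=\alpha v^{12}+v^{15}+v^{24}+v^{34},\quad dv^8=v^{16}-2\beta v^{25}+v^{27}-\beta v^{35}-v^{45},$$ and let $\{v'^1,\dots,v'^8\}$ be the analogous basis of $\mathfrak{m}_{\alpha',\beta'}^*$ (same equations with $(\alpha',\beta')$). Let $f:\mathfrak{m}_{\alpha,\beta}\to\mathfrak{m}_{\alpha',\beta'}$ be a Lie algebra isomorphism and $F:\bigwedge^*\mathfrak{m}_{\alpha',\beta'}^*\to\bigwedge^*\mathfrak{m}_{\alpha,\beta}^*$ the extension of its dual, written $F(v'^i)=\sum_{j=1}^8\lambda^i_j v^j$, so that $\Lambda=(\lambda^i_j)\in GL(8,\mathbb{R})$ and $F(dv'^i)=d(F(v'^i))$ for all $i$. Then $F(v'^i)\wedge v^{123}=0$ for $i=1,2,3$; $F(v'^i)\wedge v^{12345}=0$ for $i=4,5$; and $F(v'^i)\wedge v^{1234567}=0$ for $i=6,7$. In particular $\Lambda$ is block triangular and $$\det(\lambda^i_j)_{i,j=1,2,3}\cdot\det(\lambda^i_j)_{i,j=4,5}\cdot\det(\lambda^i_j)_{i,j=6,7}\cdot\lambda^8_8=\det\Lambda\neq0.$$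
   Context: $v^{ij}=v^i\wedge v^j$, $v^{i_1\cdots i_k}=v^{i_1}\wedge\cdots\wedge v^{i_k}$, and $d$ is the Chevalley–Eilenberg differential. *)

theory Defs
  imports Main "Jordan_Normal_Form.Determinant"
begin

text \<open>Exterior forms on an n-dimensional space with dual basis v^1, v^2, ... are represented
by their coefficient functions on (finite) index sets: a form w is the sum over sets I of
w I times v^I, where v^I = v^{i1...ik} for the increasing enumeration i1 < ... < ik of I.\<close>

type_synonym form = "nat set \<Rightarrow> real"

definition zero_form :: form where "zero_form = (\<lambda>K. 0)"

definition basis :: "nat set \<Rightarrow> form" where
  "basis S = (\<lambda>K. if K = S then 1 else 0)"

text \<open>Sign of the shuffle putting the increasing list of I in front of the one of J.\<close>
definition shuffle_sign :: "nat set \<Rightarrow> nat set \<Rightarrow> real" where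
  "shuffle_sign I J = (-1) ^ card {(i, j). i \<in> I \<and> j \<in> J \<and> j < i}"

text \<open>Wedge product: v^I wedge v^J = sign * v^(I \<union> J) if I, J disjoint, 0 otherwise.\<close>
definition wedge :: "form \<Rightarrow> form \<Rightarrow> form" where
  "wedge w e = (\<lambda>K. \<Sum>I\<in>Pow K. shuffle_sign I (K - I) * w I * e (K - I))"

definition dv :: "real \<Rightarrow> real \<Rightarrow> nat \<Rightarrow> form" where
  "dv \<alpha> \<beta> k = (\<lambda>K.
     if k = 4 then basis {1,3} K
     else if k = 5 then basis {2,3} K
     else if k = 6 then basis {1,4} K + basis {2,5} K - basis {3,5} K
     else if k = 7 then \<alpha> * basis {1,2} K + basis {1,5} K + basis {2,4} K + basis {3,4} K
     else if k = 8 then basis {1,6} K - 2 * \<beta> * basis {2,5} K + basis {2,7} K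
                        - \<beta> * basis {3,5} K - basis {4,5} K
     else 0)"

definition d1 :: "real \<Rightarrow> real \<Rightarrow> form \<Rightarrow> form" where
  "d1 \<alpha> \<beta> w = (\<lambda>K. \<Sum>j\<in>{1..8}. w {j} * dv \<alpha> \<beta> j K)"

text \<open>Entries lambda^i_j (1-based) of the 8x8 matrix Lambda (0-based in JNF).\<close>
definition lam :: "real mat \<Rightarrow> nat \<Rightarrow> nat \<Rightarrow> real" where
  "lam \<Lambda> i j = \<Lambda> $$ (i - 1, j - 1)"

definition Fv :: "real mat \<Rightarrow> nat \<Rightarrow> form" where
  "Fv \<Lambda> i = (\<lambda>K. if \<exists>j\<in>{1..8}. K = {j} then lam \<Lambda> i (the_elem K) else 0)"

definition F2 :: "real mat \<Rightarrow> form \<Rightarrow> form" where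
  "F2 \<Lambda> e = (\<lambda>K. \<Sum>a\<in>{1..8}. \<Sum>b\<in>{a<..8}. e {a, b} * wedge (Fv \<Lambda> a) (Fv \<Lambda> b) K)"

definition blk :: "real mat \<Rightarrow> nat \<Rightarrow> nat \<Rightarrow> real mat" where
  "blk \<Lambda> a b = mat (b + 1 - a) (b + 1 - a) (\<lambda>(i, j). lam \<Lambda> (a + i) (a + j))"

end

theory Submission
  imports Defs
begin

lemma det_block_split:
  fixes A :: "real mat"
  assumes A: "A \<in> carrier_mat (n + m) (n + m)"
    and z: "\<And>i j. i < n \<Longrightarrow> n \<le> j \<Longrightarrow> j < n + m \<Longrightarrow> A $$ (i, j) = 0"
  shows "det A = det (mat n n (\<lambda>(i,j). A $$ (i,j))) * det (mat m m (\<lambda>(i,j). A $$ (i+n,j+n)))"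
proof -
  obtain A1 A2 A3 A4 where sb: "split_block A n n = (A1,A2,A3,A4)" by (metis prod_cases4)
  have dims: "dim_row A = n + m" "dim_col A = n + m" using A by auto
  note S = split_block[OF sb dims]
  have e1: "A1 = mat n n (\<lambda>(i,j). A $$ (i,j))" and e4: "A4 = mat m m (\<lambda>(i,j). A $$ (i+n,j+n))"
    and e2: "A2 = mat n m (\<lambda>(i,j). A $$ (i,j+n))"
    using sb dims unfolding split_block_def Let_def by (auto simp: case_prod_unfold)
  have z2: "A2 = 0\<^sub>m n m"
    unfolding e2 by (rule eq_matI) (auto simp: z)
  have "det A = det (four_block_mat A1 A2 A3 A4)" using S(5) by simp
  also have "\<dots> = det A1 * det A4"
    by (rule det_four_block_mat_upper_right_zero[OF S(1) z2 S(3) S(4)])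
  finally show ?thesis using e1 e4 by simp
qed

lemma Fv_single: "j \<in> {1..8} \<Longrightarrow> Fv L i {j} = lam L i j"
  unfolding Fv_def by auto

lemma Fv_nz: "Fv L i I \<noteq> 0 \<Longrightarrow> \<exists>j\<in>{1..8}. I = {j} \<and> Fv L i I = lam L i j"
  unfolding Fv_def by (auto split: if_splits)

lemma wedge_basis_zero:
  assumes "\<forall>j\<in>{1..8}. j \<notin> S \<longrightarrow> lam L i j = 0"
  shows "wedge (Fv L i) (basis S) = zero_form"
proof (rule ext)
  fix K
  show "wedge (Fv L i) (basis S) K = zero_form K"
    unfolding wedge_def zero_form_def
  proof (rule sum.neutral, rule ballI)
    fix I assume I: "I \<in> Pow K"
    show "shuffle_sign I (K - I) * Fv L i I * basis S (K - I) = 0"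
    proof (cases "Fv L i I = 0")
      case False
      then obtain j where j: "j \<in> {1..8}" "I = {j}" "Fv L i I = lam L i j" using Fv_nz by blast
      show ?thesis
      proof (cases "K - I = S")
        case True
        then have "j \<notin> S" using j by auto
        then show ?thesis using assms j by simp
      qed (simp add: basis_def)
    qed simp
  qed
qed

lemma wedge_FF_zero:
  assumes "\<forall>j\<in>{1..8}. j \<notin> S \<longrightarrow> lam L a j = 0"
    and "\<forall>j\<in>{1..8}. j \<notin> S \<longrightarrow> lam L b j = 0"
    and "\<not> K \<subseteq> S"
  shows "wedge (Fv L a) (Fv L b) K = 0"
  unfolding wedge_def
proof (rule sum.neutral, rule ballI)
  fix I assume I: "I \<in> Pow K"
  show "shuffle_sign I (K - I) * Fv L a I * Fv L b (K - I) = 0"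
  proof (rule ccontr)
    assume "\<not> ?thesis"
    then have n1: "Fv L a I \<noteq> 0" and n2: "Fv L b (K - I) \<noteq> 0" by auto
    from Fv_nz[OF n1] obtain j where j: "j \<in> {1..8}" "I = {j}" "Fv L a I = lam L a j" by blast
    from Fv_nz[OF n2] obtain k where k: "k \<in> {1..8}" "K - I = {k}" "Fv L b (K - I) = lam L b k" by blast
    have "j \<in> S" using assms(1) j n1 by auto
    moreover have "k \<in> S" using assms(2) k n2 by auto
    moreover have "K = I \<union> (K - I)" using I by auto
    ultimately show False using assms(3) j k by auto
  qed
qed

lemma F2_zero:
  assumes "\<forall>a\<in>{1..8}. \<forall>b\<in>{a<..8}. e {a,b} \<noteq> 0 \<longrightarrow>
      (\<forall>j\<in>{1..8}. j \<notin> S \<longrightarrow> lam L a j = 0) \<and> (\<forall>j\<in>{1..8}. j \<notin> S \<longrightarrow> lam L b j = 0)"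
    and "\<not> K \<subseteq> S"
  shows "F2 L e K = 0"
  unfolding F2_def
proof (rule sum.neutral, rule ballI, rule sum.neutral, rule ballI)
  fix a b :: nat assume a: "a \<in> {1..8}" and b: "b \<in> {a<..8}"
  show "e {a, b} * wedge (Fv L a) (Fv L b) K = 0"
  proof (cases "e {a, b} = 0")
    case False
    then have "(\<forall>j\<in>{1..8}. j \<notin> S \<longrightarrow> lam L a j = 0)"
      "(\<forall>j\<in>{1..8}. j \<notin> S \<longrightarrow> lam L b j = 0)"
      using assms(1) a b by blast+
    then show ?thesis using wedge_FF_zero[OF _ _ assms(2)] by simp
  qed simp
qed

lemma int8: "{1..8::nat} = {1,2,3,4,5,6,7,8}" by auto

lemma d1_13: "d1 \<alpha> \<beta> (Fv L i) {1,3} = lam L i 4"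
  unfolding d1_def int8 by (simp add: Fv_def) (simp add: dv_def basis_def doubleton_eq_iff)
lemma d1_23: "d1 \<alpha> \<beta> (Fv L i) {2,3} = lam L i 5"
  unfolding d1_def int8 by (simp add: Fv_def) (simp add: dv_def basis_def doubleton_eq_iff)
lemma d1_14: "d1 \<alpha> \<beta> (Fv L i) {1,4} = lam L i 6"
  unfolding d1_def int8 by (simp add: Fv_def) (simp add: dv_def basis_def doubleton_eq_iff)
lemma d1_15: "d1 \<alpha> \<beta> (Fv L i) {1,5} = lam L i 7"
  unfolding d1_def int8 by (simp add: Fv_def) (simp add: dv_def basis_def doubleton_eq_iff)
lemma d1_16: "d1 \<alpha> \<beta> (Fv L i) {1,6} = lam L i 8"
  unfolding d1_def int8 by (simp add: Fv_def) (simp add: dv_def basis_def doubleton_eq_iff)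


lemma F2_const0: "F2 L (\<lambda>K. 0) K = 0" unfolding F2_def by simp

theorem lemma3p4:
  fixes \<alpha> \<beta> \<alpha>' \<beta>' :: real and \<Lambda> :: "real mat"
  assumes "\<Lambda> \<in> carrier_mat 8 8"
    and "det \<Lambda> \<noteq> 0"
    and "\<forall>i\<in>{1..8}. F2 \<Lambda> (dv \<alpha>' \<beta>' i) = d1 \<alpha> \<beta> (Fv \<Lambda> i)"
  shows "(\<forall>i\<in>{1,2,3}. wedge (Fv \<Lambda> i) (basis {1,2,3}) = zero_form)
       \<and> (\<forall>i\<in>{4,5}. wedge (Fv \<Lambda> i) (basis {1..5}) = zero_form)
       \<and> (\<forall>i\<in>{6,7}. wedge (Fv \<Lambda> i) (basis {1..7}) = zero_form)
       \<and> det (blk \<Lambda> 1 3) * det (blk \<Lambda> 4 5) * det (blk \<Lambda> 6 7) * lam \<Lambda> 8 8 = det \<Lambda>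
       \<and> det \<Lambda> \<noteq> 0"
proof -
  have H: "\<And>i K. i \<in> {1..8} \<Longrightarrow> F2 \<Lambda> (dv \<alpha>' \<beta>' i) K = d1 \<alpha> \<beta> (Fv \<Lambda> i) K"
    using assms(3) by auto
  have r123: "\<forall>j\<in>{1..8}. j \<notin> {1,2,3} \<longrightarrow> lam \<Lambda> i j = 0" if i: "i \<in> {1,2,3}" for i
  proof -
    have dz: "dv \<alpha>' \<beta>' i = (\<lambda>K. 0)" using i by (auto simp: dv_def)
    have z: "d1 \<alpha> \<beta> (Fv \<Lambda> i) K = 0" for K
    proof -
      have "i \<in> {1..8}" using i by auto
      from H[OF this, of K] show ?thesis by (simp add: dz F2_const0)
    qed
    have "lam \<Lambda> i 4 = 0" "lam \<Lambda> i 5 = 0" "lam \<Lambda> i 6 = 0" "lam \<Lambda> i 7 = 0" "lam \<Lambda> i 8 = 0"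
      using z[of "{1,3}"] z[of "{2,3}"] z[of "{1,4}"] z[of "{1,5}"] z[of "{1,6}"]
      by (simp_all only: d1_13 d1_23 d1_14 d1_15 d1_16)
    then show ?thesis unfolding int8 by auto
  qed
  have r45: "\<forall>j\<in>{1..8}. j \<notin> {1,2,3,4,5} \<longrightarrow> lam \<Lambda> i j = 0" if i: "i \<in> {4,5}" for i
  proof -
    have c: "\<forall>a\<in>{1..8}. \<forall>b\<in>{a<..8}. dv \<alpha>' \<beta>' i {a,b} \<noteq> 0 \<longrightarrow>
      (\<forall>j\<in>{1..8}. j \<notin> {1,2,3} \<longrightarrow> lam \<Lambda> a j = 0) \<and> (\<forall>j\<in>{1..8}. j \<notin> {1,2,3} \<longrightarrow> lam \<Lambda> b j = 0)"
    proof (intro ballI impI)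
      fix a b :: nat assume "a \<in> {1..8}" "b \<in> {a<..8}" "dv \<alpha>' \<beta>' i {a,b} \<noteq> 0"
      then have "a \<in> {1,2,3} \<and> b \<in> {1,2,3}" using i
        by (auto simp: dv_def basis_def doubleton_eq_iff split: if_splits)
      then show "(\<forall>j\<in>{1..8}. j \<notin> {1,2,3} \<longrightarrow> lam \<Lambda> a j = 0) \<and> (\<forall>j\<in>{1..8}. j \<notin> {1,2,3} \<longrightarrow> lam \<Lambda> b j = 0)"
        using r123 by blast
    qed
    have z: "d1 \<alpha> \<beta> (Fv \<Lambda> i) K = 0" if "\<not> K \<subseteq> {1,2,3}" for K
      using H[of i K] i F2_zero[OF c that] by auto
    have "lam \<Lambda> i 6 = 0" using z[of "{1,4}"] unfolding d1_14 by simp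
    moreover have "lam \<Lambda> i 7 = 0" using z[of "{1,5}"] unfolding d1_15 by simp
    moreover have "lam \<Lambda> i 8 = 0" using z[of "{1,6}"] unfolding d1_16 by simp
    ultimately show ?thesis unfolding int8 by auto
  qed
  have r67: "\<forall>j\<in>{1..8}. j \<notin> {1,2,3,4,5,6,7} \<longrightarrow> lam \<Lambda> i j = 0" if i: "i \<in> {6,7}" for i
  proof -
    have r15: "\<forall>j\<in>{1..8}. j \<notin> {1,2,3,4,5} \<longrightarrow> lam \<Lambda> a j = 0" if "a \<in> {1,2,3,4,5}" for a
      using that r123 r45 by blast
    have c: "\<forall>a\<in>{1..8}. \<forall>b\<in>{a<..8}. dv \<alpha>' \<beta>' i {a,b} \<noteq> 0 \<longrightarrow>
      (\<forall>j\<in>{1..8}. j \<notin> {1,2,3,4,5} \<longrightarrow> lam \<Lambda> a j = 0) \<and> (\<forall>j\<in>{1..8}. j \<notin> {1,2,3,4,5} \<longrightarrow> lam \<Lambda> b j = 0)"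
    proof (intro ballI impI)
      fix a b :: nat assume "a \<in> {1..8}" "b \<in> {a<..8}" "dv \<alpha>' \<beta>' i {a,b} \<noteq> 0"
      then have "a \<in> {1,2,3,4,5} \<and> b \<in> {1,2,3,4,5}" using i
        by (auto simp: dv_def basis_def doubleton_eq_iff split: if_splits)
      then show "(\<forall>j\<in>{1..8}. j \<notin> {1,2,3,4,5} \<longrightarrow> lam \<Lambda> a j = 0) \<and> (\<forall>j\<in>{1..8}. j \<notin> {1,2,3,4,5} \<longrightarrow> lam \<Lambda> b j = 0)"
        using r15 by blast
    qed
    have z: "d1 \<alpha> \<beta> (Fv \<Lambda> i) K = 0" if "\<not> K \<subseteq> {1,2,3,4,5}" for K
      using H[of i K] i F2_zero[OF c that] by auto
    have "lam \<Lambda> i 8 = 0" using z[of "{1,6}"] unfolding d1_16 by simp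
    then show ?thesis unfolding int8 by auto
  qed
  have w1: "\<forall>i\<in>{1,2,3}. wedge (Fv \<Lambda> i) (basis {1,2,3}) = zero_form"
    using r123 wedge_basis_zero by blast
  have w2: "\<forall>i\<in>{4,5}. wedge (Fv \<Lambda> i) (basis {1..5}) = zero_form"
  proof
    fix i :: nat assume "i \<in> {4,5}"
    then have "\<forall>j\<in>{1..8}. j \<notin> {1..5} \<longrightarrow> lam \<Lambda> i j = 0" using r45[of i] by auto
    then show "wedge (Fv \<Lambda> i) (basis {1..5}) = zero_form" by (rule wedge_basis_zero)
  qed
  have w3: "\<forall>i\<in>{6,7}. wedge (Fv \<Lambda> i) (basis {1..7}) = zero_form"
  proof
    fix i :: nat assume "i \<in> {6,7}"
    then have "\<forall>j\<in>{1..8}. j \<notin> {1..7} \<longrightarrow> lam \<Lambda> i j = 0" using r67[of i] by auto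
    then show "wedge (Fv \<Lambda> i) (basis {1..7}) = zero_form" by (rule wedge_basis_zero)
  qed
  have LL: "\<Lambda> $$ (i, j) = lam \<Lambda> (Suc i) (Suc j)" for i j by (simp add: lam_def)
  define B where "B = mat 5 5 (\<lambda>(i,j). \<Lambda> $$ (i+3, j+3))"
  define C where "C = mat 3 3 (\<lambda>(i,j). B $$ (i+2, j+2))"
  have d1: "det \<Lambda> = det (mat 3 3 (\<lambda>(i,j). \<Lambda> $$ (i,j))) * det B"
    unfolding B_def
  proof (rule det_block_split)
    show "\<Lambda> \<in> carrier_mat (3+5) (3+5)" using assms(1) by simp
    fix i j :: nat assume "i < 3" "3 \<le> j" "j < 3 + 5"
    then have "Suc i \<in> {1,2,3}" "Suc j \<in> {1..8}" "Suc j \<notin> {1,2,3}" by auto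
    then show "\<Lambda> $$ (i, j) = 0" using r123 LL by metis
  qed
  have d2: "det B = det (mat 2 2 (\<lambda>(i,j). B $$ (i,j))) * det C"
    unfolding C_def
  proof (rule det_block_split)
    show "B \<in> carrier_mat (2+3) (2+3)" by (simp add: B_def)
    fix i j :: nat assume "i < 2" "2 \<le> j" "j < 2 + 3"
    then have "Suc (i+3) \<in> {4,5}" "Suc (j+3) \<in> {1..8}" "Suc (j+3) \<notin> {1,2,3,4,5}" by auto
    then have "\<Lambda> $$ (i+3, j+3) = 0" using r45 LL by metis
    then show "B $$ (i, j) = 0" using \<open>i < 2\<close> \<open>j < 2 + 3\<close> by (simp add: B_def)
  qed
  have d3: "det C = det (mat 2 2 (\<lambda>(i,j). C $$ (i,j))) * det (mat 1 1 (\<lambda>(i,j). C $$ (i+2,j+2)))"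
  proof (rule det_block_split)
    show "C \<in> carrier_mat (2+1) (2+1)" by (simp add: C_def)
    fix i j :: nat assume "i < 2" "2 \<le> j" "j < 2 + 1"
    then have "Suc (i+5) \<in> {6,7}" "Suc (j+5) \<in> {1..8}" "Suc (j+5) \<notin> {1,2,3,4,5,6,7}" by auto
    then have "\<Lambda> $$ (i+5, j+5) = 0" using r67 LL by metis
    then show "C $$ (i, j) = 0" using \<open>i < 2\<close> \<open>j < 2 + 1\<close> by (simp add: C_def B_def add.commute)
  qed
  have e1: "mat 3 3 (\<lambda>(i,j). \<Lambda> $$ (i,j)) = blk \<Lambda> 1 3"
    by (rule eq_matI) (auto simp: blk_def lam_def)
  have e2: "mat 2 2 (\<lambda>(i,j). B $$ (i,j)) = blk \<Lambda> 4 5"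
    by (rule eq_matI) (auto simp: blk_def lam_def B_def add.commute)
  have e3: "mat 2 2 (\<lambda>(i,j). C $$ (i,j)) = blk \<Lambda> 6 7"
    by (rule eq_matI) (auto simp: blk_def lam_def B_def C_def add.commute)
  have e4: "det (mat 1 1 (\<lambda>(i,j). C $$ (i+2,j+2))) = lam \<Lambda> 8 8"
    by (subst det_single) (auto simp: lam_def B_def C_def add.commute)
  have dd: "det (blk \<Lambda> 1 3) * det (blk \<Lambda> 4 5) * det (blk \<Lambda> 6 7) * lam \<Lambda> 8 8 = det \<Lambda>"
    using d1 d2 d3 e1 e2 e3 e4 by (simp add: mult.assoc)
  show ?thesis using w1 w2 w3 dd assms(2) by blast
qed

end
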